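(* Let $\{(\mathbf{x}_i,t_i,\delta_i)\}_{i=1}^n$ be a dataset with $\mathbf{x}_i\in\mathbb{R}^p$, $t_i\in\mathbb{R}$, $\delta_i\in\{0,1\}$, let $\mathbf{X}$ have rows $\mathbf{x}_i^T$ (entries $X_{kl}$), $R_i=\{j:t_j\ge t_i\}$, and $$\ell(\boldsymbol\beta)=\sum_{i=1}^n\delta_i\Big[\log\Big(\sum_{j\in R_i}e^{\mathbf{x}_j^T\boldsymbol\beta}\Big)-\mathbf{x}_i^T\boldsymbol\beta\Big].$$ Then for every $\boldsymbol\beta\in\mathbb{R}^p$ and every $l\in\{1,\dots,p\}$, $$0\le\frac{\partial^2\ell(\boldsymbol\beta)}{\partial\beta_l^2}\le\frac14\sum_{i=1}^n\delta_i\Big(\max_{k\in R_i}X_{kl}-\min_{k\in R_i}X_{kl}\Big)^2$$ and $$\Big|\frac{\partial^3\ell(\boldsymbol\beta)}{\partial\beta_l^3}\Big|\le\frac{1}{6\sqrt3}\sum_{i=1}^n\delta_i\Big|\max_{k\in R_i}X_{kl}-\min_{k\in R_i}X_{kl}\Big|^3.$$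
   Context: $\ell$ is the Cox negative log partial likelihood. Consequently the first and second order partial derivatives in each coordinate are Lipschitz with these constants (this is the paper's interpretation, not part of the claim). *)

theory Defs
  imports "HOL-Analysis.Analysis"
begin

text \<open>Data: n observations, p covariates, indexed from 0.
  X i k is the k-th covariate of observation i (i < n, k < p);
  t i the observed time, d i the event indicator (in {0,1}).\<close>

definition risk_set :: "nat \<Rightarrow> (nat \<Rightarrow> real) \<Rightarrow> nat \<Rightarrow> nat set" where
  "risk_set n t i = {j \<in> {..<n}. t j \<ge> t i}"

definition lin_pred :: "nat \<Rightarrow> (nat \<Rightarrow> nat \<Rightarrow> real) \<Rightarrow> nat \<Rightarrow> (nat \<Rightarrow> real) \<Rightarrow> real" where
  "lin_pred p X i \<beta> = (\<Sum>k<p. X i k * \<beta> k)"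

definition cox_loss ::
  "nat \<Rightarrow> nat \<Rightarrow> (nat \<Rightarrow> nat \<Rightarrow> real) \<Rightarrow> (nat \<Rightarrow> real) \<Rightarrow> (nat \<Rightarrow> real) \<Rightarrow> (nat \<Rightarrow> real) \<Rightarrow> real" where
  "cox_loss n p X t d \<beta> =
     (\<Sum>i<n. d i * (ln (\<Sum>j\<in>risk_set n t i. exp (lin_pred p X j \<beta>)) - lin_pred p X i \<beta>))"

definition partial_deriv :: "nat \<Rightarrow> nat \<Rightarrow> ((nat \<Rightarrow> real) \<Rightarrow> real) \<Rightarrow> (nat \<Rightarrow> real) \<Rightarrow> real" where
  "partial_deriv m l f \<beta> = (deriv ^^ m) (\<lambda>s. f (\<beta>(l := s))) (\<beta> l)"

end

theory Submission
  imports Defs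
begin


lemma sqrt3_facts: "sqrt 3 > 0" "(sqrt 3)^2 = 3" "sqrt 3 \<le> 9/4" "sqrt 3 \<le> 2"
proof -
  show "sqrt 3 > 0" by simp
  show "(sqrt 3)^2 = 3" by simp
  have "sqrt 3 \<le> sqrt ((9/4)^2)" by (rule real_sqrt_le_mono) (simp add: power2_eq_square)
  then show "sqrt 3 \<le> 9/4" by simp
  have "sqrt 3 \<le> sqrt (2^2)" by (rule real_sqrt_le_mono) simp
  then show "sqrt 3 \<le> 2" by simp
qed

lemma poly_case1:
  fixes D v r :: real
  assumes "0 \<le> v" "v \<le> D/3" "r > 0" "r^2 = 3"
  shows "v * (D - v) * (D - 2* v) \<le> D^3 / (6 * r)"
proof -
  define \<nu> where "\<nu> = D - 2* v"
  have nu0: "\<nu> \<ge> 0" "D \<ge> 0" using assms unfolding \<nu>_def by auto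
  have nn: "r* \<nu> + 2* D \<ge> 0" using nu0 assms(3) by simp
  have sq: "(r* \<nu> - D)^2 * (r* \<nu> + 2* D) \<ge> 0" using nn by simp
  have r3: "r^3 = 3* r" using assms(4) by (metis power3_eq_cube power2_eq_square mult.commute)
  have ex: "(r* \<nu> - D)^2 * (r* \<nu> + 2* D) = r^3* \<nu>^3 - 3* r* \<nu>* D^2 + 2* D^3"
    using assms(4) by (simp add: algebra_simps power2_eq_square power3_eq_cube)
  have "0 \<le> r^3* \<nu>^3 - 3* r* \<nu>* D^2 + 2* D^3" using sq ex by linarith
  then have k0: "0 \<le> 3* r* \<nu>^3 - 3* r* \<nu>* D^2 + 2* D^3" using r3 by (simp add: mult.assoc)
  have e2: "3* r* \<nu>*(D^2- \<nu>^2) = 3* r* \<nu>* D^2 - 3* r* \<nu>^3"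
    by (simp add: algebra_simps power2_eq_square power3_eq_cube)
  have key: "3* r* \<nu>*(D^2 - \<nu>^2) \<le> 2* D^3" using k0 e2 by linarith
  have "v * (D - v) * (D - 2* v) = \<nu> * (D^2 - \<nu>^2) / 4" unfolding \<nu>_def
    by (simp add: algebra_simps power2_eq_square)
  then have "6 * r * (v * (D - v) * (D - 2* v)) = (3* r* \<nu>*(D^2 - \<nu>^2)) / 2" by simp
  then have "6 * r * (v * (D - v) * (D - 2* v)) \<le> D^3" using key by linarith
  then show ?thesis using assms(3) by (simp add: field_simps)
qed

lemma poly_case2:
  fixes D v r :: real
  assumes "D/3 \<le> v" "v \<le> D" "r > 0" "r \<le> 9/4"
  shows "(D - v)^3 / 4 \<le> D^3 / (6 * r)"
proof -
  have D: "D \<ge> 0" using assms by simp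
  have "(D - v)^3 \<le> (2* D/3)^3" using assms by (intro power_mono) auto
  then have "(D - v)^3 / 4 \<le> 2 * D^3 / 27" by (simp add: power3_eq_cube)
  also have "\<dots> \<le> D^3 / (6 * r)"
  proof -
    have "12 * r * D^3 \<le> 27 * D^3" using assms D by (intro mult_right_mono) auto
    then show ?thesis using assms(3) by (simp add: field_simps)
  qed
  finally show ?thesis .
qed

lemma cubic_central_bound:
  fixes R :: "nat set" and p a :: "nat \<Rightarrow> real"
  assumes fin: "finite R" and pn: "\<And>j. j\<in>R \<Longrightarrow> p j \<ge> 0" and p1: "sum p R = 1"
    and rng: "\<And>j. j\<in>R \<Longrightarrow> m \<le> a j \<and> a j \<le> M"
  shows "(\<Sum>j\<in>R. p j * (a j - (\<Sum>k\<in>R. p k * a k))^3) \<le> (M-m)^3/(6* sqrt 3)"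
proof -
  define \<mu> where "\<mu> = (\<Sum>k\<in>R. p k * a k)"
  define D where "D = M - m"
  define v where "v = \<mu> - m"
  have hv: "(\<Sum>j\<in>R. p j * (a j - m)) = v"
    unfolding v_def \<mu>_def by (simp add: right_diff_distrib sum_subtractf sum_distrib_right[symmetric] p1)
  have hM: "(\<Sum>j\<in>R. p j * (M - a j)) = D - v"
    unfolding v_def \<mu>_def D_def by (simp add: right_diff_distrib sum_subtractf sum_distrib_right[symmetric] p1)
  have v0: "0 \<le> v" unfolding hv[symmetric] using pn rng by (intro sum_nonneg) simp
  have "0 \<le> (\<Sum>j\<in>R. p j * (M - a j))" using pn rng by (intro sum_nonneg) simp
  then have vD: "v \<le> D" using hM by linarith
  have eq: "\<And>j. a j - \<mu> = (a j - m) - v" unfolding v_def by simp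
  note s3 = sqrt3_facts
  show ?thesis
  proof (cases "v \<le> D/3")
    case True
    define K where "K = (D-3* v)* D + 3* v^2"
    have pt: "p j * (a j - \<mu>)^3 \<le> p j * (K * (a j - m) - v^3)" if j: "j \<in> R" for j
    proof -
      define u where "u = a j - m"
      have u0: "0 \<le> u" "u \<le> D" using rng[OF j] unfolding u_def D_def by auto
      have "0 \<le> (D-3* v)* u*(D-u) + u^2*(D-u)" using u0 True
        by (intro add_nonneg_nonneg mult_nonneg_nonneg) auto
      moreover have "K * u - v^3 - (u - v)^3 = (D-3* v)* u*(D-u) + u^2*(D-u)"
        unfolding K_def by (simp add: algebra_simps power2_eq_square power3_eq_cube)
      ultimately have "(u - v)^3 \<le> K* u - v^3" by linarith
      then show ?thesis unfolding eq u_def[symmetric] using pn[OF j] by (rule mult_left_mono)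
    qed
    have "(\<Sum>j\<in>R. p j * (a j - \<mu>)^3) \<le> (\<Sum>j\<in>R. p j * (K * (a j - m) - v^3))"
      using pt by (rule sum_mono)
    also have "\<dots> = (\<Sum>j\<in>R. K * (p j * (a j - m)) - v^3 * p j)"
      by (rule sum.cong) (simp_all add: algebra_simps)
    also have "\<dots> = K * (\<Sum>j\<in>R. p j * (a j - m)) - v^3 * sum p R"
      by (simp add: sum_subtractf sum_distrib_left)
    also have "\<dots> = v * (D - v) * (D - 2* v)" unfolding hv p1 K_def
      by (simp add: algebra_simps power2_eq_square power3_eq_cube)
    also have "\<dots> \<le> D^3/(6* sqrt 3)" using poly_case1[OF v0 True s3(1) s3(2)] .
    finally show ?thesis unfolding \<mu>_def D_def .
  next
    case False
    define c where "c = (3* v - D)/2"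
    have Deq: "D = 3* v - 2* c" unfolding c_def by (simp add: field_simps)
    define K where "K = 3* v^2 - 2* c* D - c^2"
    define C where "C = c^2* D - v^3"
    have pt: "p j * (a j - \<mu>)^3 \<le> p j * (K * (a j - m) + C)" if j: "j \<in> R" for j
    proof -
      define u where "u = a j - m"
      have u0: "0 \<le> u" "u \<le> D" using rng[OF j] unfolding u_def D_def by auto
      have "0 \<le> (D-u)*(u-c)^2" using u0 by simp
      moreover have "K * u + C - (u - v)^3 = (D-u)*(u-c)^2"
        unfolding K_def C_def Deq by (simp add: algebra_simps power2_eq_square power3_eq_cube)
      ultimately have "(u - v)^3 \<le> K* u + C" by linarith
      then show ?thesis unfolding eq u_def[symmetric] using pn[OF j] by (rule mult_left_mono)
    qed
    have "(\<Sum>j\<in>R. p j * (a j - \<mu>)^3) \<le> (\<Sum>j\<in>R. p j * (K * (a j - m) + C))"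
      using pt by (rule sum_mono)
    also have "\<dots> = (\<Sum>j\<in>R. K * (p j * (a j - m)) + C * p j)"
      by (rule sum.cong) (simp_all add: algebra_simps)
    also have "\<dots> = K * (\<Sum>j\<in>R. p j * (a j - m)) + C * sum p R"
      by (simp add: sum.distrib sum_distrib_left)
    also have "\<dots> = (D - v)^3 / 4"
    proof -
      have "4 * (K * v + C) = (D - v)^3" unfolding K_def C_def Deq
        by (simp add: algebra_simps power2_eq_square power3_eq_cube)
      then show ?thesis unfolding hv p1 by simp
    qed
    also have "\<dots> \<le> D^3/(6* sqrt 3)" using False vD s3 by (intro poly_case2) auto
    finally show ?thesis unfolding \<mu>_def D_def .
  qed
qed

lemma var_central_bound:
  fixes R :: "nat set" and p a :: "nat \<Rightarrow> real"
  assumes fin: "finite R" and pn: "\<And>j. j\<in>R \<Longrightarrow> p j \<ge> 0" and p1: "sum p R = 1"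
    and rng: "\<And>j. j\<in>R \<Longrightarrow> m \<le> a j \<and> a j \<le> M"
  shows "(\<Sum>j\<in>R. p j * (a j - (\<Sum>k\<in>R. p k * a k))^2) \<le> (M-m)^2/4"
proof -
  define \<mu> where "\<mu> = (\<Sum>k\<in>R. p k * a k)"
  define D where "D = M - m"
  define v where "v = \<mu> - m"
  have hv: "(\<Sum>j\<in>R. p j * (a j - m)) = v"
    unfolding v_def \<mu>_def by (simp add: right_diff_distrib sum_subtractf sum_distrib_right[symmetric] p1)
  have eq: "\<And>j. a j - \<mu> = (a j - m) - v" unfolding v_def by simp
  have pt: "p j * (a j - \<mu>)^2 \<le> p j * ((D - 2* v) * (a j - m) + v^2)" if j: "j \<in> R" for j
  proof -
    define u where "u = a j - m"
    have u0: "0 \<le> u" "u \<le> D" using rng[OF j] unfolding u_def D_def by auto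
    have "0 \<le> u*(D-u)" using u0 by simp
    moreover have "(D - 2* v)* u + v^2 - (u - v)^2 = u*(D-u)" by (simp add: algebra_simps power2_eq_square)
    ultimately have "(u - v)^2 \<le> (D - 2* v)* u + v^2" by linarith
    then show ?thesis unfolding eq u_def[symmetric] using pn[OF j] by (rule mult_left_mono)
  qed
  have "(\<Sum>j\<in>R. p j * (a j - \<mu>)^2) \<le> (\<Sum>j\<in>R. p j * ((D - 2* v) * (a j - m) + v^2))"
    using pt by (rule sum_mono)
  also have "\<dots> = (\<Sum>j\<in>R. (D - 2* v) * (p j * (a j - m)) + v^2 * p j)"
    by (rule sum.cong) (simp_all add: algebra_simps)
  also have "\<dots> = (D - 2* v) * (\<Sum>j\<in>R. p j * (a j - m)) + v^2 * sum p R"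
    by (simp add: sum.distrib sum_distrib_left)
  also have "\<dots> = D^2/4 - (D - 2* v)^2/4"
  proof -
    have "4*((D - 2* v) * v + v^2) = D^2 - (D - 2* v)^2" by (simp add: algebra_simps power2_eq_square)
    then show ?thesis unfolding hv p1 by simp
  qed
  also have "\<dots> \<le> D^2/4" by simp
  finally show ?thesis unfolding \<mu>_def D_def .
qed



definition Sm :: "nat set \<Rightarrow> (nat \<Rightarrow> real) \<Rightarrow> (nat \<Rightarrow> real) \<Rightarrow> nat \<Rightarrow> real \<Rightarrow> real" where
  "Sm R a c k s = (\<Sum>j\<in>R. a j ^ k * exp (c j + a j * s))"

lemma Sm_deriv: "(Sm R a c k has_real_derivative Sm R a c (k+1) s) (at s)"
proof -
  have "((\<lambda>s. \<Sum>j\<in>R. a j ^ k * exp (c j + a j * s)) has_real_derivative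
        (\<Sum>j\<in>R. a j ^ (k+1) * exp (c j + a j * s))) (at s)"
    by (rule DERIV_sum) (auto intro!: derivative_eq_intros simp: algebra_simps)
  then show ?thesis unfolding Sm_def[abs_def] .
qed

lemma Sm0_pos: "finite R \<Longrightarrow> R \<noteq> {} \<Longrightarrow> Sm R a c 0 s > 0"
  unfolding Sm_def by (intro sum_pos) auto

definition g1 where "g1 R a c s = Sm R a c 1 s / Sm R a c 0 s"
definition g2 where "g2 R a c s = Sm R a c 2 s / Sm R a c 0 s - (Sm R a c 1 s / Sm R a c 0 s)^2"
definition g3 where "g3 R a c s = Sm R a c 3 s / Sm R a c 0 s
   - 3 * (Sm R a c 1 s / Sm R a c 0 s) * (Sm R a c 2 s / Sm R a c 0 s)
   + 2 * (Sm R a c 1 s / Sm R a c 0 s)^3"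

lemma abs_derivs:
  fixes FA FB FC FD :: "real \<Rightarrow> real"
  assumes d0: "(FA has_real_derivative FB s) (at s)"
    and d1: "(FB has_real_derivative FC s) (at s)"
    and d2: "(FC has_real_derivative FD s) (at s)"
    and pos: "FA s > 0"
  shows "((\<lambda>s. ln (FA s)) has_real_derivative FB s / FA s) (at s)"
    and "((\<lambda>s. FB s / FA s) has_real_derivative FC s / FA s - (FB s / FA s)^2) (at s)"
    and "((\<lambda>s. FC s / FA s - (FB s / FA s)^2) has_real_derivative
           FD s / FA s - 3 * (FB s / FA s) * (FC s / FA s) + 2 * (FB s / FA s)^3) (at s)"
proof -
  show "((\<lambda>s. ln (FA s)) has_real_derivative FB s / FA s) (at s)"
    using pos by (auto intro!: derivative_eq_intros d0 simp: field_simps)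
  have q1: "((\<lambda>s. FB s / FA s) has_real_derivative (FC s * FA s - FB s * FB s) / (FA s * FA s)) (at s)"
    using DERIV_divide[OF d1 d0] pos by simp
  then show "((\<lambda>s. FB s / FA s) has_real_derivative FC s / FA s - (FB s / FA s)^2) (at s)"
    by (rule DERIV_cong) (use pos in \<open>simp add: field_simps power2_eq_square\<close>)
  have q2: "((\<lambda>s. FC s / FA s) has_real_derivative (FD s * FA s - FC s * FB s) / (FA s * FA s)) (at s)"
    using DERIV_divide[OF d2 d0] pos by simp
  have q3: "((\<lambda>s. (FB s / FA s)^2) has_real_derivative
      of_nat 2 * (((FC s * FA s - FB s * FB s) / (FA s * FA s)) * (FB s / FA s)^(2 - Suc 0))) (at s)"
    by (rule DERIV_power[OF q1])
  show "((\<lambda>s. FC s / FA s - (FB s / FA s)^2) has_real_derivative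
           FD s / FA s - 3 * (FB s / FA s) * (FC s / FA s) + 2 * (FB s / FA s)^3) (at s)"
    by (rule DERIV_cong[OF DERIV_diff[OF q2 q3]])
      (use pos in \<open>simp add: field_simps power2_eq_square power3_eq_cube\<close>)
qed

lemma Sm_derivs:
  assumes "finite R" "R \<noteq> {}"
  shows "((\<lambda>s. ln (Sm R a c 0 s)) has_real_derivative g1 R a c s) (at s)"
    and "(g1 R a c has_real_derivative g2 R a c s) (at s)"
    and "(g2 R a c has_real_derivative g3 R a c s) (at s)"
proof -
  have d0: "(Sm R a c 0 has_real_derivative Sm R a c 1 s) (at s)" using Sm_deriv[of R a c 0 s] by simp
  have d1: "(Sm R a c 1 has_real_derivative Sm R a c 2 s) (at s)" using Sm_deriv[of R a c 1 s] unfolding one_add_one .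
  have e: "(2::nat) + 1 = 3" by simp
  have d2: "(Sm R a c 2 has_real_derivative Sm R a c 3 s) (at s)" using Sm_deriv[of R a c 2 s] unfolding e .
  have pos: "Sm R a c 0 s > 0" using Sm0_pos[OF assms] .
  note D = abs_derivs[where FA="Sm R a c 0" and FB="Sm R a c 1" and FC="Sm R a c 2" and FD="Sm R a c 3", OF d0 d1 d2 pos]
  show "((\<lambda>s. ln (Sm R a c 0 s)) has_real_derivative g1 R a c s) (at s)"
    using D(1) unfolding g1_def .
  show "(g1 R a c has_real_derivative g2 R a c s) (at s)"
    using D(2) unfolding g1_def[abs_def] g2_def .
  show "(g2 R a c has_real_derivative g3 R a c s) (at s)"
    using D(3) unfolding g2_def[abs_def] g3_def .
qed

lemma g_moments:
  fixes R :: "nat set" and a c :: "nat \<Rightarrow> real" and s :: real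
  assumes fin: "finite R" and ne: "R \<noteq> {}"
  defines "pp \<equiv> (\<lambda>j. exp (c j + a j * s) / Sm R a c 0 s)"
  shows "sum pp R = 1" "\<And>j. pp j \<ge> 0"
    "g2 R a c s = (\<Sum>j\<in>R. pp j * (a j - (\<Sum>k\<in>R. pp k * a k))^2)"
    "g3 R a c s = (\<Sum>j\<in>R. pp j * (a j - (\<Sum>k\<in>R. pp k * a k))^3)"
proof -
  define W where "W = Sm R a c 0 s"
  have W: "W > 0" unfolding W_def using Sm0_pos[OF fin ne] .
  have Ek: "Sm R a c k s / W = (\<Sum>j\<in>R. pp j * a j ^ k)" for k
    unfolding pp_def W_def[symmetric] unfolding Sm_def sum_divide_distrib
    by (rule sum.cong) (auto simp: mult.commute)
  show "sum pp R = 1" using Ek[of 0] W unfolding W_def by simp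
  show "\<And>j. pp j \<ge> 0" unfolding pp_def using W W_def by simp
  define \<mu> where "\<mu> = (\<Sum>k\<in>R. pp k * a k)"
  define E2 where "E2 = (\<Sum>j\<in>R. pp j * a j ^ 2)"
  define E3 where "E3 = (\<Sum>j\<in>R. pp j * a j ^ 3)"
  have p1: "sum pp R = 1" using Ek[of 0] W unfolding W_def by simp
  have E1: "Sm R a c 1 s / W = \<mu>" using Ek[of 1] unfolding \<mu>_def by simp
  have c2: "(\<Sum>j\<in>R. pp j * (a j - \<mu>)^2) = E2 - 2 * \<mu> * \<mu> + \<mu>^2 * sum pp R"
  proof -
    have "(\<Sum>j\<in>R. pp j * (a j - \<mu>)^2) = (\<Sum>j\<in>R. pp j * a j ^ 2 - 2 * \<mu> * (pp j * a j) + \<mu>^2 * pp j)"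
      by (rule sum.cong) (simp_all add: algebra_simps power2_eq_square)
    also have "\<dots> = E2 - 2 * \<mu> * \<mu> + \<mu>^2 * sum pp R"
      unfolding E2_def \<mu>_def by (simp add: sum.distrib sum_subtractf sum_distrib_left)
    finally show ?thesis .
  qed
  have c3: "(\<Sum>j\<in>R. pp j * (a j - \<mu>)^3) = E3 - 3 * \<mu> * E2 + 3 * \<mu>^2 * \<mu> - \<mu>^3 * sum pp R"
  proof -
    have "(\<Sum>j\<in>R. pp j * (a j - \<mu>)^3) = (\<Sum>j\<in>R. pp j * a j ^ 3 - 3 * \<mu> * (pp j * a j ^ 2) + 3 * \<mu>^2 * (pp j * a j) - \<mu>^3 * pp j)"
      by (rule sum.cong) (simp_all add: algebra_simps power2_eq_square power3_eq_cube)
    also have "\<dots> = E3 - 3 * \<mu> * E2 + 3 * \<mu>^2 * \<mu> - \<mu>^3 * sum pp R"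
      unfolding E2_def E3_def \<mu>_def by (simp add: sum.distrib sum_subtractf sum_distrib_left)
    finally show ?thesis .
  qed
  show "g2 R a c s = (\<Sum>j\<in>R. pp j * (a j - (\<Sum>k\<in>R. pp k * a k))^2)"
    unfolding \<mu>_def[symmetric] c2 g2_def W_def[symmetric] E1 Ek[of 2] E2_def[symmetric] p1
    by (simp add: power2_eq_square)
  show "g3 R a c s = (\<Sum>j\<in>R. pp j * (a j - (\<Sum>k\<in>R. pp k * a k))^3)"
    unfolding \<mu>_def[symmetric] c3 g3_def W_def[symmetric] E1 Ek[of 2] Ek[of 3] E2_def[symmetric] E3_def[symmetric] p1
    by (simp add: power2_eq_square power3_eq_cube)
qed

lemma lin_pred_upd:
  assumes "l < p"
  shows "lin_pred p X j (\<beta>(l:=s)) = lin_pred p X j (\<beta>(l:=0)) + X j l * s"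
proof -
  have "lin_pred p X j (\<beta>(l:=s)) = (\<Sum>k<p. X j k * (\<beta>(l:=0)) k + (if k = l then X j l * s else 0))"
    unfolding lin_pred_def by (rule sum.cong) auto
  also have "\<dots> = lin_pred p X j (\<beta>(l:=0)) + X j l * s"
    unfolding lin_pred_def using assms by (simp add: sum.distrib)
  finally show ?thesis .
qed

lemma g_bounds:
  fixes R :: "nat set" and a c :: "nat \<Rightarrow> real" and s :: real
  assumes fin: "finite R" and ne: "R \<noteq> {}"
  shows "0 \<le> g2 R a c s \<and> g2 R a c s \<le> (Max (a`R) - Min (a`R))^2/4
    \<and> \<bar>g3 R a c s\<bar> \<le> \<bar>Max (a`R) - Min (a`R)\<bar>^3/(6* sqrt 3)"
proof -
  define pp where "pp = (\<lambda>j. exp (c j + a j * s) / Sm R a c 0 s)"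
  note M = g_moments[OF fin ne, where a=a and c=c and s=s, folded pp_def]
  have M3: "g2 R a c s = (\<Sum>j\<in>R. pp j * (a j - (\<Sum>k\<in>R. pp k * a k))^2)"
    unfolding pp_def by (rule M(3))
  have M4: "g3 R a c s = (\<Sum>j\<in>R. pp j * (a j - (\<Sum>k\<in>R. pp k * a k))^3)"
    unfolding pp_def by (rule M(4))
  have pn: "\<And>j. j \<in> R \<Longrightarrow> 0 \<le> pp j" unfolding pp_def by (rule divide_nonneg_pos[OF _ Sm0_pos[OF fin ne]]) simp
  define m where "m = Min (a`R)"
  define MM where "MM = Max (a`R)"
  have rng: "\<And>j. j\<in>R \<Longrightarrow> m \<le> a j \<and> a j \<le> MM" unfolding m_def MM_def using fin by auto
  have rng': "\<And>j. j\<in>R \<Longrightarrow> - MM \<le> - a j \<and> - a j \<le> - m" using rng by auto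
  have mM: "m \<le> MM" using rng ne by force
  have v0: "0 \<le> g2 R a c s" unfolding M3 by (intro sum_nonneg mult_nonneg_nonneg pn zero_le_power2)
  have v1: "g2 R a c s \<le> (MM - m)^2/4" unfolding M3
    by (rule var_central_bound[OF fin, of pp, OF pn M(1) rng])
  have u1: "g3 R a c s \<le> (MM - m)^3/(6* sqrt 3)" unfolding M4
    by (rule cubic_central_bound[OF fin, of pp, OF pn M(1) rng])
  have u2: "(\<Sum>j\<in>R. pp j * (- a j - (\<Sum>k\<in>R. pp k * - a k))^3) \<le> (- m - - MM)^3/(6* sqrt 3)"
    by (rule cubic_central_bound[OF fin, of pp, OF pn M(1) rng'])
  have "(\<Sum>j\<in>R. pp j * (- a j - (\<Sum>k\<in>R. pp k * - a k))^3) = - g3 R a c s"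
  proof -
    define \<mu> where "\<mu> = (\<Sum>k\<in>R. pp k * a k)"
    have neg: "(\<Sum>k\<in>R. pp k * - a k) = - \<mu>" unfolding \<mu>_def by (simp add: sum_negf)
    have "(\<Sum>j\<in>R. pp j * (- a j - - \<mu>)^3) = (\<Sum>j\<in>R. - (pp j * (a j - \<mu>)^3))"
      by (rule sum.cong) (simp_all add: power3_eq_cube algebra_simps)
    also have "\<dots> = - g3 R a c s" unfolding M4 \<mu>_def by (simp add: sum_negf)
    finally show ?thesis unfolding neg .
  qed
  then have u3: "- g3 R a c s \<le> (MM - m)^3/(6* sqrt 3)" using u2 by simp
  have "\<bar>MM - m\<bar> = MM - m" using mM by simp
  then show ?thesis using v0 v1 u1 u3 unfolding m_def MM_def by (simp add: abs_le_iff)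
qed

lemma Sm_upd:
  "Sm R a c 0 s = (\<Sum>j\<in>R. exp (c j + a j * s))" unfolding Sm_def by simp

theorem theorem2:
  fixes n p :: nat and X :: "nat \<Rightarrow> nat \<Rightarrow> real" and t d :: "nat \<Rightarrow> real"
    and \<beta> :: "nat \<Rightarrow> real" and l :: nat
  assumes d01: "\<And>i. i < n \<Longrightarrow> d i \<in> {0, 1}"
    and l: "l < p"
  shows "0 \<le> partial_deriv 2 l (cox_loss n p X t d) \<beta>
       \<and> partial_deriv 2 l (cox_loss n p X t d) \<beta>
           \<le> 1/4 * (\<Sum>i<n. d i * (Max ((\<lambda>k. X k l) ` risk_set n t i)
                                    - Min ((\<lambda>k. X k l) ` risk_set n t i))^2)
       \<and> \<bar>partial_deriv 3 l (cox_loss n p X t d) \<beta>\<bar>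
           \<le> 1 / (6 * sqrt 3) * (\<Sum>i<n. d i * \<bar>Max ((\<lambda>k. X k l) ` risk_set n t i)
                                    - Min ((\<lambda>k. X k l) ` risk_set n t i)\<bar>^3)"
proof -
  define a where "a = (\<lambda>j. X j l)"
  define c where "c = (\<lambda>j. lin_pred p X j (\<beta>(l:=0)))"
  define R where "R = risk_set n t"
  have finR: "\<And>i. finite (R i)" unfolding R_def risk_set_def by simp
  have neR: "\<And>i. i < n \<Longrightarrow> R i \<noteq> {}" unfolding R_def risk_set_def by auto
  have dpos: "\<And>i. i < n \<Longrightarrow> d i \<ge> 0" using d01 by force
  define F where "F = (\<lambda>s. \<Sum>i<n. d i * (ln (Sm (R i) a c 0 s) - (c i + a i * s)))"
  define F1 where "F1 = (\<lambda>s. \<Sum>i<n. d i * (g1 (R i) a c s - a i))"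
  define F2 where "F2 = (\<lambda>s. \<Sum>i<n. d i * g2 (R i) a c s)"
  define F3 where "F3 = (\<lambda>s. \<Sum>i<n. d i * g3 (R i) a c s)"
  have cox: "(\<lambda>s. cox_loss n p X t d (\<beta>(l:=s))) = F"
  proof -
    have lp: "\<And>j s. lin_pred p X j (\<beta>(l:=s)) = c j + a j * s"
      unfolding c_def a_def by (rule lin_pred_upd[OF l])
    show ?thesis unfolding F_def cox_loss_def Sm_upd R_def lp by simp
  qed
  have DF: "(F has_real_derivative F1 s) (at s)" for s
    unfolding F_def F1_def
  proof (rule DERIV_sum)
    fix i assume "i \<in> {..<n}"
    then have i: "i < n" by simp
    have h: "((\<lambda>s. c i + a i * s) has_real_derivative a i) (at s)" by (auto intro!: derivative_eq_intros)
    show "((\<lambda>s. d i * (ln (Sm (R i) a c 0 s) - (c i + a i * s))) has_real_derivative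
          d i * (g1 (R i) a c s - a i)) (at s)"
      by (rule DERIV_cmult[OF DERIV_diff[OF Sm_derivs(1)[OF finR neR[OF i]] h]])
  qed
  have DF1: "(F1 has_real_derivative F2 s) (at s)" for s
    unfolding F1_def F2_def
  proof (rule DERIV_sum)
    fix i assume "i \<in> {..<n}"
    then have i: "i < n" by simp
    have "((\<lambda>s. d i * (g1 (R i) a c s - a i)) has_real_derivative d i * (g2 (R i) a c s - 0)) (at s)"
      by (rule DERIV_cmult[OF DERIV_diff[OF Sm_derivs(2)[OF finR neR[OF i]] DERIV_const]])
    then show "((\<lambda>s. d i * (g1 (R i) a c s - a i)) has_real_derivative d i * g2 (R i) a c s) (at s)"
      by simp
  qed
  have DF2: "(F2 has_real_derivative F3 s) (at s)" for s
    unfolding F2_def F3_def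
  proof (rule DERIV_sum)
    fix i assume "i \<in> {..<n}"
    then have i: "i < n" by simp
    show "((\<lambda>s. d i * g2 (R i) a c s) has_real_derivative d i * g3 (R i) a c s) (at s)"
      by (rule DERIV_cmult[OF Sm_derivs(3)[OF finR neR[OF i]]])
  qed
  have dF: "deriv F = F1" by (rule ext) (rule DERIV_imp_deriv[OF DF])
  have dF1: "deriv F1 = F2" by (rule ext) (rule DERIV_imp_deriv[OF DF1])
  have dF2: "deriv F2 = F3" by (rule ext) (rule DERIV_imp_deriv[OF DF2])
  have P2: "partial_deriv 2 l (cox_loss n p X t d) \<beta> = F2 (\<beta> l)"
    unfolding partial_deriv_def cox by (simp add: numeral_2_eq_2 dF dF1)
  have P3: "partial_deriv 3 l (cox_loss n p X t d) \<beta> = F3 (\<beta> l)"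
    unfolding partial_deriv_def cox by (simp add: numeral_3_eq_3 dF dF1 dF2)
  define Dl where "Dl = (\<lambda>i. Max (a ` R i) - Min (a ` R i))"
  have GB: "\<And>i. i < n \<Longrightarrow> 0 \<le> g2 (R i) a c (\<beta> l) \<and> g2 (R i) a c (\<beta> l) \<le> (Dl i)^2/4
    \<and> \<bar>g3 (R i) a c (\<beta> l)\<bar> \<le> \<bar>Dl i\<bar>^3/(6* sqrt 3)"
    unfolding Dl_def using g_bounds[OF finR neR] by blast
  have m1: "0 \<le> F2 (\<beta> l)" unfolding F2_def
    using GB dpos by (intro sum_nonneg mult_nonneg_nonneg) auto
  have m2: "F2 (\<beta> l) \<le> 1/4 * (\<Sum>i<n. d i * (Dl i)^2)"
  proof -
    have "F2 (\<beta> l) \<le> (\<Sum>i<n. d i * ((Dl i)^2/4))" unfolding F2_def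
      using GB dpos by (intro sum_mono mult_left_mono) auto
    also have "\<dots> = 1/4 * (\<Sum>i<n. d i * (Dl i)^2)" by (simp add: sum_distrib_left)
    finally show ?thesis .
  qed
  have m3: "\<bar>F3 (\<beta> l)\<bar> \<le> 1 / (6 * sqrt 3) * (\<Sum>i<n. d i * \<bar>Dl i\<bar>^3)"
  proof -
    have "\<bar>F3 (\<beta> l)\<bar> \<le> (\<Sum>i<n. \<bar>d i * g3 (R i) a c (\<beta> l)\<bar>)" unfolding F3_def
      by (rule sum_abs)
    also have "\<dots> \<le> (\<Sum>i<n. d i * (\<bar>Dl i\<bar>^3/(6* sqrt 3)))"
    proof (rule sum_mono)
      fix i assume "i \<in> {..<n}"
      then have i: "i < n" by simp
      have "\<bar>d i * g3 (R i) a c (\<beta> l)\<bar> = d i * \<bar>g3 (R i) a c (\<beta> l)\<bar>"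
        using dpos[OF i] by (simp add: abs_mult)
      also have "\<dots> \<le> d i * (\<bar>Dl i\<bar>^3/(6* sqrt 3))"
        using GB[OF i] dpos[OF i] by (intro mult_left_mono) auto
      finally show "\<bar>d i * g3 (R i) a c (\<beta> l)\<bar> \<le> d i * (\<bar>Dl i\<bar>^3/(6* sqrt 3))" .
    qed
    also have "\<dots> = 1 / (6 * sqrt 3) * (\<Sum>i<n. d i * \<bar>Dl i\<bar>^3)" by (simp add: sum_distrib_left)
    finally show ?thesis .
  qed
  show ?thesis using m1 m2 m3 unfolding P2 P3 Dl_def a_def R_def by blast
qed

end
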